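(* Let $(\mathbf Z_n,\mathbf A_{n\times n})$ be generated from the stochastic block model with parameters $(\pi,\rho_nS)$, with $S>0$ fixed and $\rho_n\to0$. For $\mathbf z_n,\mathbf e_n\in[k]^n$ let \[ W(\mathbf e_n,\mathbf z_n)=\frac12\sum_{1\le a,b\le k}\Bigl(\frac{o_{ab}(\mathbf e_n)}{n^2}-\frac{\mathbb E(o_{ab}(\mathbf e_n))}{n^2}-\frac{o_{ab}(\mathbf z_n)}{n^2}+\frac{\mathbb E(o_{ab}(\mathbf z_n))}{n^2}\Bigr)\log S_{ab}, \] with expectations conditional on $\mathbf Z_n=\mathbf z_n$. Then there is a constant $D$ depending only on $S$ such that for all $\mathbf z_n,\mathbf e_n\in[k]^n$ and all $x$, \[ \mathbb P\bigl(W(\mathbf e_n,\mathbf z_n)>x\mid\mathbf Z_n=\mathbf z_n\bigr)\le\exp\Bigl[-\sup_{t\in(0,1]}\bigl\{n^2\bigl(xt-\rho_nC_t(R,S)\bigr)\bigr\}+D\rho_n m^2\Bigr], \] where $R=R(\mathbf e_n,\mathbf z_n)$, $m=d(\mathbf e_n,\mathbf z_n)$, and \[ C_t(R,S)=\sum_a\sum_{b\ne b'}[R^T\mathbf 1]_a\,K_t(S_{ab}\|S_{ab'})\,R_{b'b},\qquad K_t(p\|q)=p^{1-t}q^t+tp\log(p/q)-p. \]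
   Context: SBM with parameters $(\pi,\rho_nS)$: $k\ge2$ fixed; $\pi$ a probability vector on $[k]$ with all $\pi_a>0$; $S$ a fixed symmetric $k\times k$ matrix with strictly positive entries; $\rho_n>0$. $\mathbf Z_n$ i.i.d. with law $\pi$; given $\mathbf Z_n=\mathbf z_n$, $\mathbf A_{n\times n}$ symmetric, zero diagonal, $A_{ij}$ ($i<j$) independent Bernoulli$(\rho_nS_{z_iz_j})$. $o_{ab}(\mathbf e_n)=\sum_{i,j}\mathbf 1\{e_i=a,e_j=b\}A_{ij}$. Confusion matrix $R_{ab}(\mathbf e_n,\mathbf z_n)=\frac1n\sum_i\mathbf 1\{e_i=a,z_i=b\}$, $\mathbf 1$ the all-ones vector (so $[R^T\mathbf 1]_a=n_a(\mathbf z_n)/n$). $d(\mathbf e_n,\mathbf z_n)=\#\{i:e_i\ne z_i\}$ is the Hamming distance. *)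

theory Defs
  imports "HOL-Probability.Probability"
begin

text \<open>Labels are 0..<k, vertices are 0..<n.  Upper-triangle vertex pairs.\<close>
definition sbm_edges :: "nat \<Rightarrow> (nat \<times> nat) set" where
  "sbm_edges n = {(i, j). i < j \<and> j < n}"

definition sbm_adj :: "(nat \<times> nat \<Rightarrow> bool) \<Rightarrow> nat \<Rightarrow> nat \<Rightarrow> real" where
  "sbm_adj X i j = (if i < j then of_bool (X (i, j)) else if j < i then of_bool (X (j, i)) else 0)"

text \<open>Conditional law of the adjacency matrix A given Z_n = z: independent
  Bernoulli(rho * S (z i) (z j)) entries for i < j.\<close>
definition sbm_cond :: "nat \<Rightarrow> real \<Rightarrow> (nat \<Rightarrow> nat \<Rightarrow> real) \<Rightarrow> (nat \<Rightarrow> nat)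
    \<Rightarrow> (nat \<Rightarrow> nat \<Rightarrow> real) pmf" where
  "sbm_cond n \<rho> S z = map_pmf sbm_adj
     (Pi_pmf (sbm_edges n) False (\<lambda>(i, j). bernoulli_pmf (\<rho> * S (z i) (z j))))"

definition block_count :: "nat \<Rightarrow> (nat \<Rightarrow> nat) \<Rightarrow> (nat \<Rightarrow> nat \<Rightarrow> real) \<Rightarrow> nat \<Rightarrow> nat \<Rightarrow> real" where
  "block_count n e A a b = (\<Sum>i<n. \<Sum>j<n. if e i = a \<and> e j = b then A i j else 0)"

definition sbm_W :: "nat \<Rightarrow> nat \<Rightarrow> real \<Rightarrow> (nat \<Rightarrow> nat \<Rightarrow> real) \<Rightarrow> (nat \<Rightarrow> nat) \<Rightarrow> (nat \<Rightarrow> nat)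
    \<Rightarrow> (nat \<Rightarrow> nat \<Rightarrow> real) \<Rightarrow> real" where
  "sbm_W n k \<rho> S z e A = 1/2 * (\<Sum>a<k. \<Sum>b<k.
      (block_count n e A a b / (real n)^2
       - measure_pmf.expectation (sbm_cond n \<rho> S z) (\<lambda>B. block_count n e B a b) / (real n)^2
       - block_count n z A a b / (real n)^2
       + measure_pmf.expectation (sbm_cond n \<rho> S z) (\<lambda>B. block_count n z B a b) / (real n)^2)
      * ln (S a b))"

definition confusion :: "nat \<Rightarrow> (nat \<Rightarrow> nat) \<Rightarrow> (nat \<Rightarrow> nat) \<Rightarrow> nat \<Rightarrow> nat \<Rightarrow> real" where
  "confusion n e z a b = real (card {i\<in>{..<n}. e i = a \<and> z i = b}) / real n"

definition hamming :: "nat \<Rightarrow> (nat \<Rightarrow> nat) \<Rightarrow> (nat \<Rightarrow> nat) \<Rightarrow> nat" where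
  "hamming n e z = card {i\<in>{..<n}. e i \<noteq> z i}"

definition K_t :: "real \<Rightarrow> real \<Rightarrow> real \<Rightarrow> real" where
  "K_t t p q = p powr (1 - t) * q powr t + t * p * ln (p / q) - p"

definition C_t :: "nat \<Rightarrow> real \<Rightarrow> (nat \<Rightarrow> nat \<Rightarrow> real) \<Rightarrow> (nat \<Rightarrow> nat \<Rightarrow> real) \<Rightarrow> real" where
  "C_t k t R S = (\<Sum>a<k. \<Sum>b<k. \<Sum>b'<k.
      if b \<noteq> b' then (\<Sum>c<k. R c a) * K_t t (S a b) (S a b') * R b' b else 0)"

end

theory Submission
  imports Defs
begin

lemma K_nonneg:
  assumes "s > 0" "q > 0"
  shows "K_t t s q \<ge> 0"
proof -
  have "s powr (1 - t) * q powr t = s * exp (t * ln (q / s))"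
    using assms by (simp add: powr_def ln_div exp_diff exp_add algebra_simps)
  also have "\<dots> \<ge> s * (1 + t * ln (q / s))"
    using assms exp_ge_add_one_self[of "t * ln (q/s)"] by (intro mult_left_mono) auto
  finally have "s powr (1 - t) * q powr t \<ge> s + t * s * ln (q / s)" by (simp add: algebra_simps)
  moreover have "ln (s / q) = - ln (q / s)" using assms by (simp add: ln_div)
  ultimately show ?thesis unfolding K_t_def by (simp add: algebra_simps)
qed

lemma powr_le_max1:
  assumes "x > 0" "0 \<le> t" "t \<le> (1::real)"
  shows "x powr t \<le> max 1 x"
proof (cases "x \<ge> 1")
  case True
  then have "x powr t \<le> x powr 1" using assms by (intro powr_mono) auto
  then show ?thesis using assms by simp
next
  case False
  have "x powr t = exp (t * ln x)" using assms by (simp add: powr_def)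
  also have "\<dots> \<le> exp 0" using assms False by (intro exp_mono mult_nonneg_nonpos) auto
  finally have "x powr t \<le> 1" by simp
  then show ?thesis by simp
qed

lemma K_upper:
  assumes "s > 0" "q > 0" "0 \<le> t" "t \<le> 1"
  shows "K_t t s q \<le> max 1 s * max 1 q + s * \<bar>ln (s / q)\<bar>"
proof -
  have h1: "s powr (1 - t) * q powr t \<le> max 1 s * max 1 q"
    using assms powr_le_max1[of s "1-t"] powr_le_max1[of q t]
    by (intro mult_mono) auto
  have h2: "t * s * ln (s / q) \<le> s * \<bar>ln (s / q)\<bar>"
  proof -
    have "t * s * ln (s / q) \<le> \<bar>t * s * ln (s / q)\<bar>" by simp
    also have "\<dots> = t * (s * \<bar>ln (s / q)\<bar>)" using assms by (simp add: abs_mult)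
    also have "\<dots> \<le> 1 * (s * \<bar>ln (s / q)\<bar>)" using assms by (intro mult_right_mono) auto
    finally show ?thesis by simp
  qed
  show ?thesis unfolding K_t_def using h1 h2 assms by linarith
qed

lemma bern_mgf:
  assumes "\<rho> > 0" "s > 0" "q > 0" "\<rho> * s \<le> 1"
  shows "measure_pmf.expectation (bernoulli_pmf (\<rho> * s))
           (\<lambda>v. exp (t * ((of_bool v - \<rho> * s) * (ln q - ln s)))) \<le> exp (\<rho> * K_t t s q)"
proof -
  define p where "p = \<rho> * s"
  define L where "L = ln q - ln s"
  have p01: "0 \<le> p" "p \<le> 1" using assms by (auto simp: p_def)
  have "measure_pmf.expectation (bernoulli_pmf p) (\<lambda>v. exp (t * ((of_bool v - p) * L)))
      = exp (t * ((1 - p) * L)) * p + exp (t * ((0 - p) * L)) * (1 - p)"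
    using p01 by simp
  also have "\<dots> = exp (- (t * p * L)) * (1 - p + p * exp (t * L))"
    by (simp add: algebra_simps exp_add[symmetric] exp_diff)
  also have "\<dots> \<le> exp (- (t * p * L)) * exp (p * (exp (t * L) - 1))"
  proof (intro mult_left_mono)
    show "1 - p + p * exp (t * L) \<le> exp (p * (exp (t * L) - 1))"
      using exp_ge_add_one_self[of "p * (exp (t * L) - 1)"] by (simp add: algebra_simps)
  qed simp
  also have "\<dots> = exp (p * exp (t * L) - p - t * p * L)"
    by (simp add: exp_add[symmetric] algebra_simps)
  also have "p * exp (t * L) - p - t * p * L = \<rho> * K_t t s q"
  proof -
    have e: "exp (t * L) = q powr t * s powr (- t)"
      using assms by (simp add: L_def powr_def exp_add[symmetric] algebra_simps)
    have "s * s powr (- t) = s powr (1 - t)"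
      using assms by (simp add: powr_diff powr_minus divide_inverse)
    moreover have "ln (s / q) = - L" using assms by (simp add: L_def ln_div)
    ultimately show ?thesis unfolding K_t_def p_def e by (simp add: algebra_simps)
  qed
  finally show ?thesis by (simp add: p_def L_def)
qed


lemma edges_Suc: "sbm_edges (Suc n) = sbm_edges n \<union> (\<lambda>i. (i, n)) ` {..<n}"
  unfolding sbm_edges_def by auto

lemma finite_edges: "finite (sbm_edges n)"
proof -
  have "sbm_edges n \<subseteq> {..<n} \<times> {..<n}" unfolding sbm_edges_def by auto
  then show ?thesis by (rule finite_subset) auto
qed

lemma sum_edges_Suc:
  "(\<Sum>(i,j)\<in>sbm_edges (Suc n). F i j) = (\<Sum>(i,j)\<in>sbm_edges n. F i j) + (\<Sum>i<n. F i n)"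
proof -
  have d: "sbm_edges n \<inter> (\<lambda>i. (i, n)) ` {..<n} = {}" unfolding sbm_edges_def by auto
  have "(\<Sum>(i,j)\<in>sbm_edges (Suc n). F i j) = (\<Sum>(i,j)\<in>sbm_edges n. F i j) + (\<Sum>(i,j)\<in>(\<lambda>i. (i, n)) ` {..<n}. F i j)"
    unfolding edges_Suc by (rule sum.union_disjoint) (auto simp: finite_edges d)
  also have "(\<Sum>(i,j)\<in>(\<lambda>i. (i, n)) ` {..<n}. F i j) = (\<Sum>i<n. F i n)"
    by (subst sum.reindex) (auto simp: inj_on_def)
  finally show ?thesis .
qed

lemma sum_square_Suc:
  fixes F :: "nat \<Rightarrow> nat \<Rightarrow> real"
  shows "(\<Sum>i<Suc n. \<Sum>j<Suc n. F i j) = (\<Sum>i<n. \<Sum>j<n. F i j) + (\<Sum>i<n. F i n) + (\<Sum>j<n. F n j) + F n n"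
  by (simp add: sum.distrib)

lemma sym_sum:
  fixes F :: "nat \<Rightarrow> nat \<Rightarrow> real"
  shows "(\<forall>i j. i < n \<longrightarrow> j < n \<longrightarrow> F i j = F j i) \<Longrightarrow> (\<forall>i<n. F i i = 0) \<Longrightarrow>
    (\<Sum>i<n. \<Sum>j<n. F i j) = 2 * (\<Sum>(i,j)\<in>sbm_edges n. F i j)"
proof (induction n)
  case 0
  then show ?case by (simp add: sbm_edges_def)
next
  case (Suc n)
  have "(\<Sum>j<n. F n j) = (\<Sum>i<n. F i n)" using Suc.prems(1) by (intro sum.cong) auto
  moreover have "(\<Sum>i<n. \<Sum>j<n. F i j) = 2 * (\<Sum>(i,j)\<in>sbm_edges n. F i j)"
    using Suc.prems by (intro Suc.IH) auto
  ultimately show ?case unfolding sum_square_Suc sum_edges_Suc using Suc.prems(2) by simp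
qed

lemma pair_le:
  fixes G :: "nat \<Rightarrow> nat \<Rightarrow> real"
  assumes "\<And>i j. G i j \<ge> 0"
  shows "(\<Sum>(i,j)\<in>sbm_edges n. G i j + G j i) \<le> (\<Sum>i<n. \<Sum>j<n. G i j)"
proof (induction n)
  case 0
  then show ?case by (simp add: sbm_edges_def)
next
  case (Suc n)
  have "(\<Sum>i<n. G i n + G n i) = (\<Sum>i<n. G i n) + (\<Sum>j<n. G n j)" by (simp add: sum.distrib)
  then show ?case unfolding sum_square_Suc sum_edges_Suc using Suc.IH assms[of n n] by simp
qed


lemma swap4:
  fixes g :: "nat \<Rightarrow> nat \<Rightarrow> nat \<Rightarrow> nat \<Rightarrow> real"
  shows "(\<Sum>a\<in>A. \<Sum>b\<in>B. \<Sum>i\<in>I. \<Sum>j\<in>J. g a b i j) = (\<Sum>i\<in>I. \<Sum>j\<in>J. \<Sum>a\<in>A. \<Sum>b\<in>B. g a b i j)"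
proof -
  have "(\<Sum>a\<in>A. \<Sum>b\<in>B. \<Sum>i\<in>I. \<Sum>j\<in>J. g a b i j) = (\<Sum>a\<in>A. \<Sum>i\<in>I. \<Sum>b\<in>B. \<Sum>j\<in>J. g a b i j)"
    by (rule sum.cong[OF refl], rule sum.swap)
  also have "\<dots> = (\<Sum>a\<in>A. \<Sum>i\<in>I. \<Sum>j\<in>J. \<Sum>b\<in>B. g a b i j)"
    by (rule sum.cong[OF refl], rule sum.cong[OF refl], rule sum.swap)
  also have "\<dots> = (\<Sum>i\<in>I. \<Sum>a\<in>A. \<Sum>j\<in>J. \<Sum>b\<in>B. g a b i j)"
    by (rule sum.swap)
  also have "\<dots> = (\<Sum>i\<in>I. \<Sum>j\<in>J. \<Sum>a\<in>A. \<Sum>b\<in>B. g a b i j)"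
    by (rule sum.cong[OF refl], rule sum.swap)
  finally show ?thesis .
qed

lemma block_reindex:
  fixes h :: "nat \<Rightarrow> nat \<Rightarrow> real" and c :: "nat \<Rightarrow> nat \<Rightarrow> real"
  assumes "\<And>i. i < n \<Longrightarrow> f i < k"
  shows "(\<Sum>a<k. \<Sum>b<k. (\<Sum>i<n. \<Sum>j<n. if f i = a \<and> f j = b then h i j else 0) * c a b)
       = (\<Sum>i<n. \<Sum>j<n. h i j * c (f i) (f j))"
proof -
  have "(\<Sum>a<k. \<Sum>b<k. (\<Sum>i<n. \<Sum>j<n. if f i = a \<and> f j = b then h i j else 0) * c a b)
      = (\<Sum>a<k. \<Sum>b<k. \<Sum>i<n. \<Sum>j<n. if f i = a \<and> f j = b then h i j * c a b else 0)"
    by (simp add: sum_distrib_right, intro sum.cong refl, simp)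
  also have "\<dots> = (\<Sum>i<n. \<Sum>j<n. \<Sum>a<k. \<Sum>b<k. if f i = a \<and> f j = b then h i j * c a b else 0)"
    by (rule swap4)
  also have "\<dots> = (\<Sum>i<n. \<Sum>j<n. h i j * c (f i) (f j))"
  proof (intro sum.cong refl)
    fix i j assume "i \<in> {..<n}" "j \<in> {..<n}"
    then have "f i < k" "f j < k" using assms by auto
    then show "(\<Sum>a<k. \<Sum>b<k. if f i = a \<and> f j = b then h i j * c a b else 0) = h i j * c (f i) (f j)"
    proof -
      have "(\<Sum>a<k. \<Sum>b<k. if f i = a \<and> f j = b then h i j * c a b else 0)
          = (\<Sum>a<k. if f i = a then (\<Sum>b<k. if f j = b then h i j * c a b else 0) else 0)"
        by (intro sum.cong) auto
      also have "\<dots> = h i j * c (f i) (f j)" using \<open>f i < k\<close> \<open>f j < k\<close> by (simp add: sum.delta')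
      finally show ?thesis .
    qed
  qed
  finally show ?thesis .
qed


lemma card_as_sum: "real (card {i\<in>{..<n::nat}. P i}) = (\<Sum>i<n. of_bool (P i))"
proof -
  have "real (card {i\<in>{..<n}. P i}) = (\<Sum>i\<in>{i\<in>{..<n}. P i}. 1)" by simp
  also have "\<dots> = (\<Sum>i<n. if P i then 1 else 0)" by (rule sum.inter_filter) simp
  also have "\<dots> = (\<Sum>i<n. of_bool (P i))" by (intro sum.cong) auto
  finally show ?thesis .
qed

lemma collapse1:
  fixes \<Phi> :: "nat \<Rightarrow> real"
  assumes "\<And>i. i < n \<Longrightarrow> f i < k"
  shows "(\<Sum>a<k. (\<Sum>i<n. of_bool (f i = a)) * \<Phi> a) = (\<Sum>i<n. \<Phi> (f i))"
proof -
  have "(\<Sum>a<k. (\<Sum>i<n. of_bool (f i = a)) * \<Phi> a) = (\<Sum>a<k. \<Sum>i<n. of_bool (f i = a) * \<Phi> a)"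
    by (simp add: sum_distrib_right del: sum_of_bool_eq sum_mult_of_bool_eq)
  also have "\<dots> = (\<Sum>i<n. \<Sum>a<k. of_bool (f i = a) * \<Phi> a)" by (rule sum.swap)
  also have "\<dots> = (\<Sum>i<n. \<Phi> (f i))"
  proof (intro sum.cong refl)
    fix i assume "i \<in> {..<n}"
    then have "f i < k" using assms by auto
    have "(\<Sum>a<k. of_bool (f i = a) * \<Phi> a) = (\<Sum>a<k. if f i = a then \<Phi> a else 0)"
      by (intro sum.cong) auto
    also have "\<dots> = \<Phi> (f i)" using \<open>f i < k\<close> by (simp add: sum.delta')
    finally show "(\<Sum>a<k. of_bool (f i = a) * \<Phi> a) = \<Phi> (f i)" .
  qed
  finally show ?thesis .
qed

lemma collapse2:
  fixes G :: "nat \<Rightarrow> nat \<Rightarrow> real"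
  assumes "\<And>i. i < n \<Longrightarrow> e i < k" "\<And>i. i < n \<Longrightarrow> z i < k"
  shows "(\<Sum>b<k. \<Sum>b'<k. G b b' * (\<Sum>j<n. of_bool (e j = b' \<and> z j = b))) = (\<Sum>j<n. G (z j) (e j))"
proof -
  have "(\<Sum>b<k. \<Sum>b'<k. G b b' * (\<Sum>j<n. of_bool (e j = b' \<and> z j = b)))
      = (\<Sum>b<k. \<Sum>b'<k. \<Sum>j<n. if z j = b \<and> e j = b' then G b b' else 0)"
    by (simp add: sum_distrib_left del: sum_of_bool_eq sum_mult_of_bool_eq, intro sum.cong refl, auto)
  also have "\<dots> = (\<Sum>j<n. \<Sum>b<k. \<Sum>b'<k. if z j = b \<and> e j = b' then G b b' else 0)"
  proof -
    have "(\<Sum>b<k. \<Sum>b'<k. \<Sum>j<n. if z j = b \<and> e j = b' then G b b' else 0)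
        = (\<Sum>b<k. \<Sum>j<n. \<Sum>b'<k. if z j = b \<and> e j = b' then G b b' else 0)"
      by (rule sum.cong[OF refl], rule sum.swap)
    also have "\<dots> = (\<Sum>j<n. \<Sum>b<k. \<Sum>b'<k. if z j = b \<and> e j = b' then G b b' else 0)"
      by (rule sum.swap)
    finally show ?thesis .
  qed
  also have "\<dots> = (\<Sum>j<n. G (z j) (e j))"
  proof (intro sum.cong refl)
    fix j assume "j \<in> {..<n}"
    then have "z j < k" "e j < k" using assms by auto
    have "(\<Sum>b<k. \<Sum>b'<k. if z j = b \<and> e j = b' then G b b' else 0)
        = (\<Sum>b<k. if z j = b then (\<Sum>b'<k. if e j = b' then G b b' else 0) else 0)"
      by (intro sum.cong) auto
    also have "\<dots> = G (z j) (e j)" using \<open>z j < k\<close> \<open>e j < k\<close> by (simp add: sum.delta')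
    finally show "(\<Sum>b<k. \<Sum>b'<k. if z j = b \<and> e j = b' then G b b' else 0) = G (z j) (e j)" .
  qed
  finally show ?thesis .
qed

lemma Ct_identity:
  assumes e: "\<And>i. i < n \<Longrightarrow> e i < k" and z: "\<And>i. i < n \<Longrightarrow> z i < k"
  shows "(real n)^2 * C_t k t (confusion n e z) S
       = (\<Sum>i<n. \<Sum>j<n. if z j \<noteq> e j then K_t t (S (z i) (z j)) (S (z i) (e j)) else 0)"
proof -
  define X where "X a = (\<Sum>i<n. of_bool (z i = a) :: real)" for a
  define Y where "Y b' b = (\<Sum>j<n. of_bool (e j = b' \<and> z j = b) :: real)" for b' b
  have conf: "confusion n e z b' b = Y b' b / real n" for b' b
    unfolding confusion_def Y_def card_as_sum ..
  have colsum: "(\<Sum>c<k. confusion n e z c a) = X a / real n" for a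
  proof -
    have "(\<Sum>c<k. confusion n e z c a) = (\<Sum>c<k. Y c a) / real n"
      by (simp add: conf sum_divide_distrib)
    also have "(\<Sum>c<k. Y c a) = X a"
    proof -
      have "(\<Sum>c<k. Y c a) = (\<Sum>j<n. \<Sum>c<k. of_bool (e j = c \<and> z j = a) :: real)"
        unfolding Y_def by (rule sum.swap)
      also have "\<dots> = (\<Sum>j<n. of_bool (z j = a))"
      proof (intro sum.cong refl)
        fix j assume "j \<in> {..<n}"
        then have "e j < k" using e by auto
        have "(\<Sum>c<k. of_bool (e j = c \<and> z j = a) :: real) = (\<Sum>c<k. if e j = c then of_bool (z j = a) else 0)"
          by (intro sum.cong) auto
        also have "\<dots> = of_bool (z j = a)" using \<open>e j < k\<close> by (simp add: sum.delta')
        finally show "(\<Sum>c<k. of_bool (e j = c \<and> z j = a) :: real) = of_bool (z j = a)" .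
      qed
      finally show ?thesis unfolding X_def .
    qed
    finally show ?thesis .
  qed
  define Kf where "Kf a b b' = K_t t (S a b) (S a b')" for a b b'
  have "(real n)^2 * C_t k t (confusion n e z) S
      = (\<Sum>a<k. X a * (\<Sum>b<k. \<Sum>b'<k. (if b \<noteq> b' then Kf a b b' else 0) * Y b' b))"
  proof (cases "n = 0")
    case True
    then show ?thesis by (simp add: X_def)
  next
    case False
    then have "(real n)^2 * ((X a / real n) * K * (Y b' b / real n)) = X a * K * Y b' b" for a b' b K
      by (simp add: field_simps power2_eq_square)
    then have tm: "(real n)^2 * (if b \<noteq> b' then X a / real n * K * confusion n e z b' b else 0)
        = X a * ((if b \<noteq> b' then K else 0) * Y b' b)" for a b b' K
      by (auto simp: conf mult.assoc)
    show ?thesis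
      unfolding C_t_def colsum sum_distrib_left
      by (intro sum.cong refl) (simp only: tm Kf_def)
  qed
  also have "\<dots> = (\<Sum>a<k. X a * (\<Sum>j<n. if z j \<noteq> e j then Kf a (z j) (e j) else 0))"
    unfolding Y_def by (subst collapse2[OF e z]) (auto simp del: sum_of_bool_eq)
  also have "\<dots> = (\<Sum>i<n. \<Sum>j<n. if z j \<noteq> e j then Kf (z i) (z j) (e j) else 0)"
    unfolding X_def by (rule collapse1[OF z])
  finally show ?thesis unfolding Kf_def .
qed


definition Mpmf :: "nat \<Rightarrow> real \<Rightarrow> (nat \<Rightarrow> nat \<Rightarrow> real) \<Rightarrow> (nat \<Rightarrow> nat) \<Rightarrow> (nat \<times> nat \<Rightarrow> bool) pmf" where
  "Mpmf n \<rho> S z = Pi_pmf (sbm_edges n) False (\<lambda>(i, j). bernoulli_pmf (\<rho> * S (z i) (z j)))"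

lemma sbm_cond_Mpmf: "sbm_cond n \<rho> S z = map_pmf sbm_adj (Mpmf n \<rho> S z)"
  unfolding sbm_cond_def Mpmf_def ..

lemma finite_Mpmf: "finite (set_pmf (Mpmf n \<rho> S z))"
  unfolding Mpmf_def by (subst set_Pi_pmf) (auto simp: finite_edges intro!: finite_PiE_dflt)

lemma integrable_Mpmf: "integrable (measure_pmf (Mpmf n \<rho> S z)) (f :: _ \<Rightarrow> real)"
  by (rule integrable_measure_pmf_finite[OF finite_Mpmf])

lemma expect_component:
  assumes "(i, j) \<in> sbm_edges n" "0 \<le> \<rho> * S (z i) (z j)" "\<rho> * S (z i) (z j) \<le> 1"
  shows "measure_pmf.expectation (Mpmf n \<rho> S z) (\<lambda>Y. g (Y (i, j)) :: real)
       = measure_pmf.expectation (bernoulli_pmf (\<rho> * S (z i) (z j))) g"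
proof -
  have "measure_pmf.expectation (Mpmf n \<rho> S z) (\<lambda>Y. g (Y (i, j)))
      = measure_pmf.expectation (map_pmf (\<lambda>Y. Y (i, j)) (Mpmf n \<rho> S z)) g"
    by simp
  also have "map_pmf (\<lambda>Y. Y (i, j)) (Mpmf n \<rho> S z) = bernoulli_pmf (\<rho> * S (z i) (z j))"
    unfolding Mpmf_def using assms(1) by (subst Pi_pmf_component) (auto simp: finite_edges)
  finally show ?thesis .
qed

lemma expect_adj:
  assumes z: "\<forall>i<n. z i < k" and Spos: "\<forall>a<k. \<forall>b<k. S a b > 0" and Ssym: "\<forall>a<k. \<forall>b<k. S a b = S b a"
    and rho: "\<rho> > 0" "\<forall>a<k. \<forall>b<k. \<rho> * S a b \<le> 1"
    and ij: "i < n" "j < n"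
  shows "measure_pmf.expectation (Mpmf n \<rho> S z) (\<lambda>Y. sbm_adj Y i j)
       = (if i \<noteq> j then \<rho> * S (z i) (z j) else 0)"
proof -
  have zi: "z i < k" "z j < k" using z ij by auto
  have p01: "0 \<le> \<rho> * S (z a) (z b)" "\<rho> * S (z a) (z b) \<le> 1" if "a < n" "b < n" for a b
    using that z Spos rho by (auto intro!: mult_nonneg_nonneg less_imp_le)
  consider "i < j" | "j < i" | "i = j" by linarith
  then show ?thesis
  proof cases
    case 1
    then have e: "(i, j) \<in> sbm_edges n" using ij by (auto simp: sbm_edges_def)
    have "measure_pmf.expectation (Mpmf n \<rho> S z) (\<lambda>Y. sbm_adj Y i j)
        = measure_pmf.expectation (Mpmf n \<rho> S z) (\<lambda>Y. of_bool (Y (i, j)))"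
      using 1 by (simp add: sbm_adj_def)
    also have "\<dots> = \<rho> * S (z i) (z j)"
      using expect_component[of i j n \<rho> S z "of_bool", OF e p01[OF ij]] p01[OF ij] by simp
    finally show ?thesis using 1 by simp
  next
    case 2
    then have e: "(j, i) \<in> sbm_edges n" using ij by (auto simp: sbm_edges_def)
    have "measure_pmf.expectation (Mpmf n \<rho> S z) (\<lambda>Y. sbm_adj Y i j)
        = measure_pmf.expectation (Mpmf n \<rho> S z) (\<lambda>Y. of_bool (Y (j, i)))"
      using 2 by (simp add: sbm_adj_def)
    also have "\<dots> = \<rho> * S (z j) (z i)"
      using expect_component[of j i n \<rho> S z "of_bool", OF e p01[OF ij(2,1)]] p01[OF ij(2,1)] by simp
    finally show ?thesis using 2 Ssym zi by simp
  next
    case 3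
    then show ?thesis by (simp add: sbm_adj_def)
  qed
qed

lemma expect_block:
  assumes z: "\<forall>i<n. z i < k" and Spos: "\<forall>a<k. \<forall>b<k. S a b > 0" and Ssym: "\<forall>a<k. \<forall>b<k. S a b = S b a"
    and rho: "\<rho> > 0" "\<forall>a<k. \<forall>b<k. \<rho> * S a b \<le> 1"
  shows "measure_pmf.expectation (sbm_cond n \<rho> S z) (\<lambda>B. block_count n f B a b)
     = (\<Sum>i<n. \<Sum>j<n. if f i = a \<and> f j = b then (if i \<noteq> j then \<rho> * S (z i) (z j) else 0) else 0)"
proof -
  have "measure_pmf.expectation (sbm_cond n \<rho> S z) (\<lambda>B. block_count n f B a b)
      = measure_pmf.expectation (Mpmf n \<rho> S z) (\<lambda>Y. \<Sum>i<n. \<Sum>j<n. if f i = a \<and> f j = b then sbm_adj Y i j else 0)"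
    by (simp add: sbm_cond_Mpmf block_count_def)
  also have "\<dots> = (\<Sum>i<n. \<Sum>j<n. measure_pmf.expectation (Mpmf n \<rho> S z) (\<lambda>Y. if f i = a \<and> f j = b then sbm_adj Y i j else 0))"
    by (simp add: integrable_Mpmf)
  also have "\<dots> = (\<Sum>i<n. \<Sum>j<n. if f i = a \<and> f j = b then (if i \<noteq> j then \<rho> * S (z i) (z j) else 0) else 0)"
  proof (intro sum.cong refl)
    fix i j assume ij: "i \<in> {..<n}" "j \<in> {..<n}"
    show "measure_pmf.expectation (Mpmf n \<rho> S z) (\<lambda>Y. if f i = a \<and> f j = b then sbm_adj Y i j else 0)
      = (if f i = a \<and> f j = b then (if i \<noteq> j then \<rho> * S (z i) (z j) else 0) else 0)"
    proof (cases "f i = a \<and> f j = b")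
      case False
      then have lam: "(\<lambda>Y. if f i = a \<and> f j = b then sbm_adj Y i j else 0) = (\<lambda>Y. 0)" by auto
      show ?thesis by (simp only: lam if_not_P[OF False]) simp
    qed (use ij in \<open>simp_all add: expect_adj[OF assms]\<close>)
  qed
  finally show ?thesis .
qed


lemma four_sum:
  fixes x1 x2 x3 x4 l :: "nat \<Rightarrow> nat \<Rightarrow> real"
  shows "(\<Sum>a\<in>A. \<Sum>b\<in>B. (x1 a b / N - x2 a b / N - x3 a b / N + x4 a b / N) * l a b)
    = ((\<Sum>a\<in>A. \<Sum>b\<in>B. x1 a b * l a b) - (\<Sum>a\<in>A. \<Sum>b\<in>B. x2 a b * l a b)
       - (\<Sum>a\<in>A. \<Sum>b\<in>B. x3 a b * l a b) + (\<Sum>a\<in>A. \<Sum>b\<in>B. x4 a b * l a b)) / N"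
proof -
  have "(\<Sum>a\<in>A. \<Sum>b\<in>B. (x1 a b / N - x2 a b / N - x3 a b / N + x4 a b / N) * l a b)
     = (\<Sum>a\<in>A. \<Sum>b\<in>B. (x1 a b * l a b - x2 a b * l a b - x3 a b * l a b + x4 a b * l a b) / N)"
    by (intro sum.cong refl) (simp add: divide_inverse algebra_simps)
  then show ?thesis
    by (simp add: sum_divide_distrib[symmetric] sum_subtractf sum.distrib diff_divide_distrib add_divide_distrib)
qed

lemma W_identity:
  assumes z: "\<forall>i<n. z i < k" and e: "\<forall>i<n. e i < k"
    and Spos: "\<forall>a<k. \<forall>b<k. S a b > 0" and Ssym: "\<forall>a<k. \<forall>b<k. S a b = S b a"
    and rho: "\<rho> > 0" "\<forall>a<k. \<forall>b<k. \<rho> * S a b \<le> 1"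
  shows "(real n)^2 * sbm_W n k \<rho> S z e (sbm_adj Y)
     = (\<Sum>(i,j)\<in>sbm_edges n. (of_bool (Y (i, j)) - \<rho> * S (z i) (z j)) * (ln (S (e i) (e j)) - ln (S (z i) (z j))))"
proof -
  define A where "A = sbm_adj Y"
  define Q where "Q i j = (if i \<noteq> j then \<rho> * S (z i) (z j) else 0)" for i j
  define l where "l a b = ln (S a b)" for a b
  have T1: "(\<Sum>a<k. \<Sum>b<k. block_count n f A a b * l a b) = (\<Sum>i<n. \<Sum>j<n. A i j * l (f i) (f j))"
    if "\<forall>i<n. f i < k" for f
    unfolding block_count_def by (rule block_reindex) (use that in auto)
  have T2: "(\<Sum>a<k. \<Sum>b<k. measure_pmf.expectation (sbm_cond n \<rho> S z) (\<lambda>B. block_count n f B a b) * l a b)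
      = (\<Sum>i<n. \<Sum>j<n. Q i j * l (f i) (f j))"
    if "\<forall>i<n. f i < k" for f
    unfolding expect_block[OF z Spos Ssym rho] Q_def by (rule block_reindex) (use that in auto)
  define F where "F i j = (A i j - Q i j) * (l (e i) (e j) - l (z i) (z j))" for i j
  have main: "2 * ((real n)^2 * sbm_W n k \<rho> S z e A) = (\<Sum>i<n. \<Sum>j<n. F i j)"
  proof (cases "n = 0")
    case True
    then show ?thesis by simp
  next
    case False
    have "sbm_W n k \<rho> S z e A = 1/2 * (((\<Sum>i<n. \<Sum>j<n. A i j * l (e i) (e j)) - (\<Sum>i<n. \<Sum>j<n. Q i j * l (e i) (e j))
       - (\<Sum>i<n. \<Sum>j<n. A i j * l (z i) (z j)) + (\<Sum>i<n. \<Sum>j<n. Q i j * l (z i) (z j))) / (real n)^2)"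
      unfolding sbm_W_def l_def[symmetric] four_sum T1[OF e] T1[OF z] T2[OF e] T2[OF z] ..
    moreover have "(\<Sum>i<n. \<Sum>j<n. F i j) = (\<Sum>i<n. \<Sum>j<n. A i j * l (e i) (e j)) - (\<Sum>i<n. \<Sum>j<n. Q i j * l (e i) (e j))
       - (\<Sum>i<n. \<Sum>j<n. A i j * l (z i) (z j)) + (\<Sum>i<n. \<Sum>j<n. Q i j * l (z i) (z j))"
      unfolding F_def by (simp add: sum_subtractf sum.distrib algebra_simps)
    ultimately show ?thesis using False by simp
  qed
  have Fsym: "\<forall>i j. i < n \<longrightarrow> j < n \<longrightarrow> F i j = F j i"
  proof (intro allI impI)
    fix i j assume "i < n" "j < n"
    then have "z i < k" "z j < k" "e i < k" "e j < k" using z e by auto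
    then show "F i j = F j i" unfolding F_def A_def Q_def l_def sbm_adj_def using Ssym by auto
  qed
  have Fdiag: "\<forall>i<n. F i i = 0" unfolding F_def A_def Q_def sbm_adj_def by simp
  have "(real n)^2 * sbm_W n k \<rho> S z e A = (\<Sum>(i,j)\<in>sbm_edges n. F i j)"
    using main sym_sum[OF Fsym Fdiag] by simp
  also have "\<dots> = (\<Sum>(i,j)\<in>sbm_edges n. (of_bool (Y (i, j)) - \<rho> * S (z i) (z j)) * (ln (S (e i) (e j)) - ln (S (z i) (z j))))"
    by (intro sum.cong refl) (auto simp: sbm_edges_def F_def A_def Q_def sbm_adj_def l_def)
  finally show ?thesis unfolding A_def .
qed


lemma chernoff:
  assumes z: "\<forall>i<n. z i < k" and e: "\<forall>i<n. e i < k"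
    and Spos: "\<forall>a<k. \<forall>b<k. S a b > 0" and Ssym: "\<forall>a<k. \<forall>b<k. S a b = S b a"
    and rho: "\<rho> > 0" "\<forall>a<k. \<forall>b<k. \<rho> * S a b \<le> 1"
    and t: "t \<ge> 0"
  shows "measure_pmf.prob (sbm_cond n \<rho> S z) {A. sbm_W n k \<rho> S z e A > x}
    \<le> exp (- (t * (real n)^2 * x) + \<rho> * (\<Sum>(i,j)\<in>sbm_edges n. K_t t (S (z i) (z j)) (S (e i) (e j))))"
proof -
  define M where "M = Mpmf n \<rho> S z"
  define N2 where "N2 = (real n)^2"
  define pp where "pp = (\<lambda>(i,j). \<rho> * S (z i) (z j))"
  define LL where "LL = (\<lambda>(i,j). ln (S (e i) (e j)) - ln (S (z i) (z j)))"
  define KK where "KK = (\<lambda>(i,j). K_t t (S (z i) (z j)) (S (e i) (e j)))"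
  define f where "f = (\<lambda>x v. exp (t * ((of_bool v - pp x) * LL x)))"
  have N2: "N2 \<ge> 0" unfolding N2_def by simp
  have Wid: "N2 * sbm_W n k \<rho> S z e (sbm_adj Y) = (\<Sum>x\<in>sbm_edges n. (of_bool (Y x) - pp x) * LL x)" for Y
    unfolding N2_def W_identity[OF z e Spos Ssym rho] pp_def LL_def
    by (intro sum.cong refl) auto
  have "measure_pmf.prob (sbm_cond n \<rho> S z) {A. sbm_W n k \<rho> S z e A > x}
      = measure_pmf.prob M {Y. sbm_W n k \<rho> S z e (sbm_adj Y) > x}"
    unfolding sbm_cond_Mpmf M_def by (simp add: vimage_def)
  also have "\<dots> = measure_pmf.expectation M (indicator {Y. sbm_W n k \<rho> S z e (sbm_adj Y) > x})"
    by simp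
  also have "\<dots> \<le> measure_pmf.expectation M (\<lambda>Y. exp (t * (N2 * sbm_W n k \<rho> S z e (sbm_adj Y) - N2 * x)))"
  proof (rule integral_mono)
    fix Y
    show "indicator {Y. sbm_W n k \<rho> S z e (sbm_adj Y) > x} Y \<le> exp (t * (N2 * sbm_W n k \<rho> S z e (sbm_adj Y) - N2 * x))"
    proof (cases "sbm_W n k \<rho> S z e (sbm_adj Y) > x")
      case True
      then have "N2 * sbm_W n k \<rho> S z e (sbm_adj Y) - N2 * x \<ge> 0"
        using N2 by (simp add: right_diff_distrib[symmetric])
      then have "t * (N2 * sbm_W n k \<rho> S z e (sbm_adj Y) - N2 * x) \<ge> 0" using t by simp
      then show ?thesis using True by simp
    qed simp
  qed (auto simp: M_def integrable_Mpmf)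
  also have "\<dots> = measure_pmf.expectation M (\<lambda>Y. exp (- (t * N2 * x)) * (\<Prod>x\<in>sbm_edges n. f x (Y x)))"
  proof (intro Bochner_Integration.integral_cong refl)
    fix Y
    have "t * (N2 * sbm_W n k \<rho> S z e (sbm_adj Y) - N2 * x) = - (t * N2 * x) + (\<Sum>x\<in>sbm_edges n. t * ((of_bool (Y x) - pp x) * LL x))"
      unfolding right_diff_distrib Wid sum_distrib_left by simp
    moreover have "(\<Prod>x\<in>sbm_edges n. f x (Y x)) = exp (\<Sum>x\<in>sbm_edges n. t * ((of_bool (Y x) - pp x) * LL x))"
      by (simp add: exp_sum finite_edges f_def)
    ultimately show "exp (t * (N2 * sbm_W n k \<rho> S z e (sbm_adj Y) - N2 * x)) = exp (- (t * N2 * x)) * (\<Prod>x\<in>sbm_edges n. f x (Y x))"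
      by (simp add: exp_add[symmetric])
  qed
  also have "\<dots> = exp (- (t * N2 * x)) * measure_pmf.expectation M (\<lambda>Y. \<Prod>x\<in>sbm_edges n. f x (Y x))"
    by simp
  also have "measure_pmf.expectation M (\<lambda>Y. \<Prod>x\<in>sbm_edges n. f x (Y x))
      = (\<Prod>x\<in>sbm_edges n. measure_pmf.expectation ((\<lambda>(i, j). bernoulli_pmf (\<rho> * S (z i) (z j))) x) (f x))"
    unfolding M_def Mpmf_def
    by (rule expectation_prod_Pi_pmf) (auto simp: finite_edges f_def intro!: integrable_measure_pmf_finite)
  also have "\<dots> \<le> (\<Prod>x\<in>sbm_edges n. exp (\<rho> * KK x))"
  proof (rule prod_mono)
    fix x assume x: "x \<in> sbm_edges n"
    obtain i j where xij: "x = (i, j)" by (cases x)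
    with x have ij: "(i, j) \<in> sbm_edges n" by simp
    then have ijn: "i < n" "j < n" by (auto simp: sbm_edges_def)
    then have zz: "z i < k" "z j < k" "e i < k" "e j < k" using z e by auto
    have bd: "measure_pmf.expectation (bernoulli_pmf (\<rho> * S (z i) (z j)))
           (\<lambda>v. exp (t * ((of_bool v - \<rho> * S (z i) (z j)) * (ln (S (e i) (e j)) - ln (S (z i) (z j))))))
         \<le> exp (\<rho> * K_t t (S (z i) (z j)) (S (e i) (e j)))"
      by (rule bern_mgf) (use zz Spos rho in auto)
    have "0 \<le> measure_pmf.expectation ((\<lambda>(i, j). bernoulli_pmf (\<rho> * S (z i) (z j))) (i, j)) (f (i, j))"
      by (simp add: f_def)
    moreover have "measure_pmf.expectation ((\<lambda>(i, j). bernoulli_pmf (\<rho> * S (z i) (z j))) (i, j)) (f (i, j))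
        \<le> exp (\<rho> * KK (i, j))"
      using bd by (simp add: f_def pp_def LL_def KK_def)
    ultimately show "0 \<le> measure_pmf.expectation ((\<lambda>(i, j). bernoulli_pmf (\<rho> * S (z i) (z j))) x) (f x) \<and>
      measure_pmf.expectation ((\<lambda>(i, j). bernoulli_pmf (\<rho> * S (z i) (z j))) x) (f x) \<le> exp (\<rho> * KK x)"
      unfolding xij by simp
  qed
  also have "(\<Prod>x\<in>sbm_edges n. exp (\<rho> * KK x)) = exp (\<rho> * (\<Sum>x\<in>sbm_edges n. KK x))"
    by (simp add: exp_sum finite_edges sum_distrib_left)
  finally have "measure_pmf.prob (sbm_cond n \<rho> S z) {A. sbm_W n k \<rho> S z e A > x}
     \<le> exp (- (t * N2 * x)) * exp (\<rho> * (\<Sum>x\<in>sbm_edges n. KK x))"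
    by (simp add: mult_left_mono)
  then show ?thesis unfolding N2_def KK_def by (simp add: exp_add[symmetric])
qed


definition Dconst :: "nat \<Rightarrow> (nat \<Rightarrow> nat \<Rightarrow> real) \<Rightarrow> real" where
  "Dconst k S = (\<Sum>a<k. \<Sum>b<k. \<Sum>c<k. \<Sum>d<k.
      max 1 (S a b) * max 1 (S c d) + S a b * \<bar>ln (S a b / S c d)\<bar>)"

lemma Dconst_ge:
  assumes Spos: "\<forall>a<k. \<forall>b<k. S a b > 0" and abcd: "a < k" "b < k" "c < k" "d < k"
  shows "max 1 (S a b) * max 1 (S c d) + S a b * \<bar>ln (S a b / S c d)\<bar> \<le> Dconst k S"
proof -
  define B where "B a b c d = max 1 (S a b) * max 1 (S c d) + S a b * \<bar>ln (S a b / S c d)\<bar>" for a b c d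
  have Bnn: "B a b c d \<ge> 0" if "a < k" "b < k" for a b c d
    unfolding B_def using Spos that by (intro add_nonneg_nonneg mult_nonneg_nonneg) (auto intro: less_imp_le)
  have "B a b c d \<le> (\<Sum>d<k. B a b c d)"
    by (rule member_le_sum) (use abcd Bnn in auto)
  also have "\<dots> \<le> (\<Sum>c<k. \<Sum>d<k. B a b c d)"
    by (rule member_le_sum[where f = "\<lambda>c. \<Sum>d<k. B a b c d"]) (use abcd Bnn in \<open>auto intro!: sum_nonneg\<close>)
  also have "\<dots> \<le> (\<Sum>b<k. \<Sum>c<k. \<Sum>d<k. B a b c d)"
    by (rule member_le_sum[where f = "\<lambda>b. \<Sum>c<k. \<Sum>d<k. B a b c d"]) (use abcd Bnn in \<open>auto intro!: sum_nonneg\<close>)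
  also have "\<dots> \<le> (\<Sum>a<k. \<Sum>b<k. \<Sum>c<k. \<Sum>d<k. B a b c d)"
    by (rule member_le_sum[where f = "\<lambda>a. \<Sum>b<k. \<Sum>c<k. \<Sum>d<k. B a b c d"]) (use abcd Bnn in \<open>auto intro!: sum_nonneg\<close>)
  finally show ?thesis unfolding B_def Dconst_def .
qed

lemma Dconst_nonneg:
  assumes "\<forall>a<k. \<forall>b<k. S a b > 0"
  shows "Dconst k S \<ge> 0"
  unfolding Dconst_def using assms
  by (intro sum_nonneg add_nonneg_nonneg mult_nonneg_nonneg) (auto intro: less_imp_le)

lemma K_self: "s > 0 \<Longrightarrow> K_t t s s = 0"
  unfolding K_t_def by (simp add: powr_add[symmetric])

lemma Ksum_bound:
  assumes z: "\<forall>i<n. z i < k" and e: "\<forall>i<n. e i < k"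
    and Spos: "\<forall>a<k. \<forall>b<k. S a b > 0" and Ssym: "\<forall>a<k. \<forall>b<k. S a b = S b a"
    and t: "0 \<le> t" "t \<le> 1"
  shows "(\<Sum>(i,j)\<in>sbm_edges n. K_t t (S (z i) (z j)) (S (e i) (e j)))
     \<le> (real n)^2 * C_t k t (confusion n e z) S + Dconst k S * (real (hamming n e z))^2"
proof -
  define D where "D = Dconst k S"
  have D0: "D \<ge> 0" unfolding D_def by (rule Dconst_nonneg[OF Spos])
  define T where "T i j = K_t t (S (z i) (z j)) (S (z i) (e j))" for i j
  define mis where "mis i = (e i \<noteq> z i)" for i
  define G where "G i j = (if i < n \<and> j < n then (if z j \<noteq> e j then T i j else 0) + D / 2 * of_bool (mis i \<and> mis j) else 0)" for i j
  have Tnn: "T i j \<ge> 0" if "i < n" "j < n" for i j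
    unfolding T_def using that z e Spos by (intro K_nonneg) auto
  have Gnn: "G i j \<ge> 0" for i j
    unfolding G_def using Tnn D0 by auto
  have pair: "K_t t (S (z i) (z j)) (S (e i) (e j)) \<le> G i j + G j i" if "(i, j) \<in> sbm_edges n" for i j
  proof -
    from that have ij: "i < n" "j < n" by (auto simp: sbm_edges_def)
    then have zz: "z i < k" "z j < k" "e i < k" "e j < k" using z e by auto
    have G1: "G i j \<ge> 0" "G j i \<ge> 0" by (rule Gnn)+
    consider "\<not> mis i" "\<not> mis j" | "mis i" "\<not> mis j" | "\<not> mis i" "mis j" | "mis i" "mis j" by blast
    then show ?thesis
    proof cases
      case 1
      then have "K_t t (S (z i) (z j)) (S (e i) (e j)) = 0" using zz Spos by (simp add: mis_def K_self)
      then show ?thesis using G1 by simp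
    next
      case 2
      then have "K_t t (S (z i) (z j)) (S (e i) (e j)) = T j i"
        using zz Ssym by (simp add: mis_def T_def)
      moreover have "G j i \<ge> T j i" using 2 ij D0 by (simp add: G_def mis_def)
      ultimately show ?thesis using G1 by simp
    next
      case 3
      then have "K_t t (S (z i) (z j)) (S (e i) (e j)) = T i j"
        by (simp add: mis_def T_def)
      moreover have "G i j \<ge> T i j" using 3 ij D0 by (simp add: G_def mis_def)
      ultimately show ?thesis using G1 by simp
    next
      case 4
      have "K_t t (S (z i) (z j)) (S (e i) (e j)) \<le> max 1 (S (z i) (z j)) * max 1 (S (e i) (e j)) + S (z i) (z j) * \<bar>ln (S (z i) (z j) / S (e i) (e j))\<bar>"
        using zz Spos t by (intro K_upper) auto
      also have "\<dots> \<le> D" unfolding D_def by (rule Dconst_ge[OF Spos zz])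
      finally have "K_t t (S (z i) (z j)) (S (e i) (e j)) \<le> D" .
      moreover have "G i j \<ge> D / 2" "G j i \<ge> D / 2"
        using 4 ij Tnn by (auto simp: G_def mis_def)
      ultimately show ?thesis by simp
    qed
  qed
  have "(\<Sum>(i,j)\<in>sbm_edges n. K_t t (S (z i) (z j)) (S (e i) (e j))) \<le> (\<Sum>(i,j)\<in>sbm_edges n. G i j + G j i)"
    by (rule sum_mono) (use pair in auto)
  also have "\<dots> \<le> (\<Sum>i<n. \<Sum>j<n. G i j)" by (rule pair_le[OF Gnn])
  also have "\<dots> = (\<Sum>i<n. \<Sum>j<n. if z j \<noteq> e j then T i j else 0) + D / 2 * (\<Sum>i<n. \<Sum>j<n. of_bool (mis i \<and> mis j))"
    by (simp add: G_def sum.distrib sum_distrib_left del: sum_of_bool_eq)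
  also have "(\<Sum>i<n. \<Sum>j<n. if z j \<noteq> e j then T i j else 0) = (real n)^2 * C_t k t (confusion n e z) S"
    unfolding T_def by (rule Ct_identity[symmetric]) (use z e in auto)
  also have "(\<Sum>i<n. \<Sum>j<n. of_bool (mis i \<and> mis j) :: real) = (real (hamming n e z))^2"
  proof -
    have "(\<Sum>i<n. \<Sum>j<n. of_bool (mis i \<and> mis j) :: real) = (\<Sum>i<n. of_bool (mis i)) * (\<Sum>j<n. of_bool (mis j))"
    proof -
      have "(\<Sum>i<n. \<Sum>j<n. of_bool (mis i \<and> mis j) :: real) = (\<Sum>i<n. \<Sum>j<n. of_bool (mis i) * of_bool (mis j))"
        by (intro sum.cong refl) (simp only: of_bool_conj)
      then show ?thesis by (simp only: sum_product)
    qed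
    also have "(\<Sum>i<n. of_bool (mis i) :: real) = real (hamming n e z)"
      unfolding hamming_def card_as_sum mis_def ..
    finally show ?thesis by (simp add: power2_eq_square)
  qed
  finally have bound: "(\<Sum>(i,j)\<in>sbm_edges n. K_t t (S (z i) (z j)) (S (e i) (e j)))
     \<le> (real n)^2 * C_t k t (confusion n e z) S + D / 2 * (real (hamming n e z))^2" .
  moreover have "D / 2 * (real (hamming n e z))^2 \<le> D * (real (hamming n e z))^2"
    using D0 by (intro mult_right_mono) auto
  ultimately show ?thesis unfolding D_def[symmetric] by linarith
qed


theorem proposition2:
  fixes k :: nat and S :: "nat \<Rightarrow> nat \<Rightarrow> real"
  assumes "k \<ge> 2"
    and "\<forall>a<k. \<forall>b<k. S a b > 0"
    and "\<forall>a<k. \<forall>b<k. S a b = S b a"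
  shows "\<exists>D::real. \<forall>\<rho>::nat \<Rightarrow> real.
    (\<forall>n. \<rho> n > 0) \<longrightarrow> \<rho> \<longlonglongrightarrow> 0 \<longrightarrow> (\<forall>n. \<forall>a<k. \<forall>b<k. \<rho> n * S a b \<le> 1) \<longrightarrow>
    (\<forall>n z e x. z \<in> {..<n} \<rightarrow>\<^sub>E {..<k} \<longrightarrow> e \<in> {..<n} \<rightarrow>\<^sub>E {..<k} \<longrightarrow>
       measure_pmf.prob (sbm_cond n (\<rho> n) S z) {A. sbm_W n k (\<rho> n) S z e A > x}
       \<le> exp (- (SUP t\<in>{0<..1}. (real n)^2 * (x * t - \<rho> n * C_t k t (confusion n e z) S))
               + D * \<rho> n * (real (hamming n e z))^2))"
proof (intro exI[of _ "Dconst k S"] allI impI)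
  fix \<rho> :: "nat \<Rightarrow> real" and n :: nat and z e :: "nat \<Rightarrow> nat" and x :: real
  assume rpos: "\<forall>n. \<rho> n > 0" and rle: "\<forall>n. \<forall>a<k. \<forall>b<k. \<rho> n * S a b \<le> 1"
    and zP: "z \<in> {..<n} \<rightarrow>\<^sub>E {..<k}" and eP: "e \<in> {..<n} \<rightarrow>\<^sub>E {..<k}"
  have z: "\<forall>i<n. z i < k" using zP by auto
  have e: "\<forall>i<n. e i < k" using eP by auto
  have Spos: "\<forall>a<k. \<forall>b<k. S a b > 0" and Ssym: "\<forall>a<k. \<forall>b<k. S a b = S b a" using assms by auto
  have rho: "\<rho> n > 0" "\<forall>a<k. \<forall>b<k. \<rho> n * S a b \<le> 1" using rpos rle by auto
  define P where "P = measure_pmf.prob (sbm_cond n (\<rho> n) S z) {A. sbm_W n k (\<rho> n) S z e A > x}"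
  define f where "f t = (real n)^2 * (x * t - \<rho> n * C_t k t (confusion n e z) S)" for t
  define c where "c = Dconst k S * \<rho> n * (real (hamming n e z))^2"
  have bound: "P \<le> exp (- f t + c)" if t: "t \<in> {0<..1}" for t
  proof -
    have "P \<le> exp (- (t * (real n)^2 * x) + \<rho> n * (\<Sum>(i,j)\<in>sbm_edges n. K_t t (S (z i) (z j)) (S (e i) (e j))))"
      unfolding P_def by (rule chernoff[OF z e Spos Ssym rho]) (use t in auto)
    also have "\<dots> \<le> exp (- (t * (real n)^2 * x) + \<rho> n * ((real n)^2 * C_t k t (confusion n e z) S + Dconst k S * (real (hamming n e z))^2))"
      using Ksum_bound[OF z e Spos Ssym, of t] t rho(1) by (intro exp_mono add_left_mono mult_left_mono) auto
    also have "\<dots> = exp (- f t + c)"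
      unfolding f_def c_def by (simp add: algebra_simps)
    finally show ?thesis .
  qed
  have "P \<le> exp (- (SUP t\<in>{0<..1}. f t) + c)"
  proof (cases "P > 0")
    case False
    then show ?thesis by (smt (verit) exp_gt_zero)
  next
    case True
    have fb: "f t \<le> c - ln P" if "t \<in> {0<..1}" for t
    proof -
      have "ln P \<le> ln (exp (- f t + c))" using bound[OF that] True by (subst ln_le_cancel_iff) auto
      then have "ln P \<le> - f t + c" by simp
      then show ?thesis by simp
    qed
    have "(SUP t\<in>{0<..1}. f t) \<le> c - ln P"
      by (rule cSUP_least) (use fb in auto)
    then have "ln P \<le> - (SUP t\<in>{0<..1}. f t) + c" by simp
    then have "exp (ln P) \<le> exp (- (SUP t\<in>{0<..1}. f t) + c)" by simp
    then show ?thesis using True by simp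
  qed
  then show "measure_pmf.prob (sbm_cond n (\<rho> n) S z) {A. sbm_W n k (\<rho> n) S z e A > x}
       \<le> exp (- (SUP t\<in>{0<..1}. (real n)^2 * (x * t - \<rho> n * C_t k t (confusion n e z) S))
               + Dconst k S * \<rho> n * (real (hamming n e z))^2)"
    unfolding P_def f_def c_def .
qed

end
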